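(* For every $\zeta\in M^0$, the functional $\delta^H_\zeta$ defines a metric on $\mathrm{Conv}_{\mathrm{coe}}(\mathbb{R}^n)$.
   Context: $M^0$ is the set of continuous, strictly decreasing $\zeta:\mathbb{R}\to(0,\infty)$ with $\int_0^\infty\zeta(t)dt<\infty$. $\mathrm{Conv}_{\mathrm{coe}}(\mathbb{R}^n)$ is the set of proper, lower semicontinuous, convex, coercive functions $u:\mathbb{R}^n\to\mathbb{R}\cup\{+\infty\}$. With $\mathcal{K}^n$ the non-empty compact convex sets and $d_H$ the Hausdorff metric, define $\hat d_H$ on $\mathcal{K}^n\cup\{\emptyset\}$ by $\hat d_H(K,L)=d_H(K,L)$ if both non-empty, $\hat d_H(\emptyset,\emptyset)=0$, and $\hat d_H(K,\emptyset)=\hat d_H(\emptyset,K)=\max\{1,d_H(K,\{0\})\}$ for $K\ne\emptyset$. Then $\delta^H_\zeta(u,v)=\int_0^{\infty}\hat d_H(\{\zeta\circ u\ge s\},\{\zeta\circ v\ge s\})\,ds$, where $\{\zeta\circ u\ge s\}=\{x:\zeta(u(x))\ge s\}$ and $\zeta(+\infty):=0$. *)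

theory Defs
  imports "HOL-Analysis.Analysis"
begin

definition M0 :: "(real \<Rightarrow> real) set" where
  "M0 = {\<zeta>. continuous_on UNIV \<zeta> \<and> (\<forall>s t. s < t \<longrightarrow> \<zeta> t < \<zeta> s) \<and> (\<forall>t. 0 < \<zeta> t)
            \<and> (\<integral>\<^sup>+ t\<in>{0..}. ennreal (\<zeta> t) \<partial>lborel) < \<infinity>}"

text \<open>Functions with values in R \<union> {+\<infinity>} are modelled as ereal-valued functions never taking -\<infinity>.\<close>
definition proper_fun :: "('a \<Rightarrow> ereal) \<Rightarrow> bool" where
  "proper_fun u \<longleftrightarrow> (\<exists>x. u x \<noteq> \<infinity>) \<and> (\<forall>x. u x \<noteq> -\<infinity>)"

definition lsc_fun :: "('a::topological_space \<Rightarrow> ereal) \<Rightarrow> bool" where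
  "lsc_fun u \<longleftrightarrow> (\<forall>x. \<forall>t. t < u x \<longrightarrow> (\<forall>\<^sub>F y in at x. t < u y))"

definition convex_fun :: "('a::real_vector \<Rightarrow> ereal) \<Rightarrow> bool" where
  "convex_fun u \<longleftrightarrow> (\<forall>x y. \<forall>l::real. 0 < l \<and> l < 1 \<longrightarrow>
      u (l *\<^sub>R x + (1 - l) *\<^sub>R y) \<le> ereal l * u x + ereal (1 - l) * u y)"

definition coercive_fun :: "('a::real_normed_vector \<Rightarrow> ereal) \<Rightarrow> bool" where
  "coercive_fun u \<longleftrightarrow> (u \<longlongrightarrow> \<infinity>) at_infinity"

definition Conv_coe :: "('a::euclidean_space \<Rightarrow> ereal) set" where
  "Conv_coe = {u. proper_fun u \<and> lsc_fun u \<and> convex_fun u \<and> coercive_fun u}"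

definition hausdorff_dist :: "'a::metric_space set \<Rightarrow> 'a set \<Rightarrow> real" where
  "hausdorff_dist K L = max (Sup ((\<lambda>x. infdist x L) ` K)) (Sup ((\<lambda>y. infdist y K) ` L))"

definition hat_dH :: "'a::real_normed_vector set \<Rightarrow> 'a set \<Rightarrow> real" where
  "hat_dH K L =
     (if K = {} \<and> L = {} then 0
      else if L = {} then max 1 (hausdorff_dist K {0})
      else if K = {} then max 1 (hausdorff_dist L {0})
      else hausdorff_dist K L)"

text \<open>zeta extended by zeta(+\<infinity>) = 0 (the value at -\<infinity> is irrelevant for proper functions).\<close>
definition zeta_ext :: "(real \<Rightarrow> real) \<Rightarrow> ereal \<Rightarrow> real" where
  "zeta_ext \<zeta> a = (case a of ereal r \<Rightarrow> \<zeta> r | _ \<Rightarrow> 0)"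

definition superlevel :: "(real \<Rightarrow> real) \<Rightarrow> ('a \<Rightarrow> ereal) \<Rightarrow> real \<Rightarrow> 'a set" where
  "superlevel \<zeta> u s = {x. s \<le> zeta_ext \<zeta> (u x)}"

definition delta_H :: "(real \<Rightarrow> real) \<Rightarrow> ('a::real_normed_vector \<Rightarrow> ereal) \<Rightarrow> ('a \<Rightarrow> ereal) \<Rightarrow> ennreal" where
  "delta_H \<zeta> u v = (\<integral>\<^sup>+ s\<in>{0..}. ennreal (hat_dH (superlevel \<zeta> u s) (superlevel \<zeta> v s)) \<partial>lborel)"

end

theory Submission
  imports Defs
begin

definition edir :: "'a::real_normed_vector set \<Rightarrow> 'a set \<Rightarrow> real" where
  "edir K L = Sup ((\<lambda>x. infdist x L) ` K)"

lemma hd_edir: "hausdorff_dist K L = max (edir K L) (edir L K)"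
  by (simp add: hausdorff_dist_def edir_def)

lemma edir_bdd:
  fixes K :: "'a::real_normed_vector set"
  assumes "bounded K" shows "bdd_above ((\<lambda>x. infdist x L) ` K)"
proof -
  obtain R where R: "\<And>x. x \<in> K \<Longrightarrow> norm x \<le> R" using assms bounded_iff by blast
  have "infdist x L \<le> infdist 0 L + R" if "x \<in> K" for x
    using infdist_triangle[of x L 0] R[OF that] by (simp add: dist_norm)
  then show ?thesis by (metis bdd_aboveI2)
qed

lemma edir_upper: "bounded K \<Longrightarrow> x \<in> K \<Longrightarrow> infdist x L \<le> edir K L"
  unfolding edir_def by (rule cSup_upper) (auto intro: edir_bdd)

lemma edir_least: "K \<noteq> {} \<Longrightarrow> (\<And>x. x \<in> K \<Longrightarrow> infdist x L \<le> c) \<Longrightarrow> edir K L \<le> c"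
  unfolding edir_def by (rule cSup_least) auto

lemma edir_nonneg: "bounded K \<Longrightarrow> K \<noteq> {} \<Longrightarrow> 0 \<le> edir K L"
  using edir_upper infdist_nonneg by (metis all_not_in_conv order_trans)

lemma edir_tri:
  fixes K L M :: "'a::euclidean_space set"
  assumes "bounded K" "K \<noteq> {}" "compact L" "L \<noteq> {}"
  shows "edir K M \<le> edir K L + edir L M"
proof (rule edir_least[OF assms(2)])
  fix x assume x: "x \<in> K"
  obtain y where y: "y \<in> L" "infdist x L = dist x y"
    using infdist_attains_inf[of L x] assms compact_imp_closed by blast
  have "infdist x M \<le> infdist y M + dist x y" by (rule infdist_triangle)
  also have "\<dots> \<le> edir L M + edir K L"
    using edir_upper[of L y M] edir_upper[of K x L] x y assms compact_imp_bounded by force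
  finally show "infdist x M \<le> edir K L + edir L M" by simp
qed

lemma edir_self: "bounded K \<Longrightarrow> K \<noteq> {} \<Longrightarrow> edir K K = 0"
  by (metis antisym edir_least edir_nonneg infdist_zero order_refl)

lemma edir_zero_sub:
  fixes K L :: "'a::real_normed_vector set"
  assumes "bounded K" "closed L" "L \<noteq> {}" "edir K L \<le> 0"
  shows "K \<subseteq> L"
proof
  fix x assume "x \<in> K"
  then have "infdist x L = 0" using edir_upper[OF assms(1)] infdist_nonneg assms(4)
    by (metis antisym order_trans)
  then show "x \<in> L" using in_closure_iff_infdist_zero[OF assms(3)] assms(2) closure_closed by metis
qed

lemma edir_bound:
  assumes "K \<noteq> {}" "L \<noteq> {}" "\<And>x. x \<in> K \<Longrightarrow> norm x \<le> R1" "\<And>y. y \<in> L \<Longrightarrow> norm y \<le> R2"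
  shows "edir K L \<le> R1 + R2"
proof (rule edir_least[OF assms(1)])
  fix x assume x: "x \<in> K"
  obtain y where y: "y \<in> L" using assms(2) by blast
  have "infdist x L \<le> dist x y" using y by (rule infdist_le)
  also have "\<dots> \<le> norm x + norm y" by (simp add: dist_norm norm_triangle_ineq4)
  finally show "infdist x L \<le> R1 + R2" using assms(3)[OF x] assms(4)[OF y] by simp
qed

lemma hd_bound:
  assumes "K \<noteq> {}" "L \<noteq> {}" "\<And>x. x \<in> K \<Longrightarrow> norm x \<le> R1" "\<And>y. y \<in> L \<Longrightarrow> norm y \<le> R2"
  shows "hausdorff_dist K L \<le> R1 + R2"
  using edir_bound[OF assms] edir_bound[OF assms(2,1,4,3)] by (simp add: hd_edir)

lemma hd_nonneg: fixes K :: "'a::real_normed_vector set" shows "bounded K \<Longrightarrow> K \<noteq> {} \<Longrightarrow> 0 \<le> hausdorff_dist K L"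
  by (simp add: hd_edir edir_nonneg le_max_iff_disj)

lemma hd_sym: "hausdorff_dist K L = hausdorff_dist L K"
  by (simp add: hausdorff_dist_def max.commute)

lemma hd_tri:
  fixes K L M :: "'a::euclidean_space set"
  assumes "compact K" "K \<noteq> {}" "compact L" "L \<noteq> {}" "compact M" "M \<noteq> {}"
  shows "hausdorff_dist K M \<le> hausdorff_dist K L + hausdorff_dist L M"
  using edir_tri[of K L M] edir_tri[of M L K] assms compact_imp_bounded
  unfolding hd_edir by fastforce

lemma hd_self: fixes K :: "'a::real_normed_vector set" shows "bounded K \<Longrightarrow> K \<noteq> {} \<Longrightarrow> hausdorff_dist K K = 0"
  by (simp add: hd_edir edir_self)

lemma hd_zero:
  fixes K L :: "'a::real_normed_vector set"
  assumes "compact K" "K \<noteq> {}" "compact L" "L \<noteq> {}" "hausdorff_dist K L = 0"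
  shows "K = L"
  using edir_zero_sub[of K L] edir_zero_sub[of L K] assms compact_imp_bounded compact_imp_closed
  unfolding hd_edir by (metis max.cobounded1 max.cobounded2 subset_antisym)

definition cpt :: "'a::real_normed_vector set \<Rightarrow> bool" where
  "cpt K \<longleftrightarrow> compact K"

lemma hat_nonneg:
  fixes K L :: "'a::euclidean_space set"
  assumes "compact K" "compact L" shows "0 \<le> hat_dH K L"
  using assms compact_imp_bounded hd_nonneg by (auto simp: hat_dH_def)

lemma hat_sym: "hat_dH K L = hat_dH L K"
  by (auto simp: hat_dH_def hd_sym)

lemma hat_self: "bounded K \<Longrightarrow> hat_dH K K = 0"
  by (auto simp: hat_dH_def hd_self)

lemma hat_zero:
  fixes K L :: "'a::euclidean_space set"
  assumes "compact K" "compact L" "hat_dH K L = 0" shows "K = L"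
  using assms hd_zero[of K L] by (auto simp: hat_dH_def split: if_splits)

lemma hat_tri:
  fixes K L M :: "'a::euclidean_space set"
  assumes "compact K" "compact L" "compact M"
  shows "hat_dH K M \<le> hat_dH K L + hat_dH L M"
proof -
  have c0: "compact {0::'a}" "{0::'a} \<noteq> {}" by auto
  note nn = hat_nonneg[OF assms(1,2)] hat_nonneg[OF assms(2,3)] hat_nonneg[OF assms(1,3)]
  note tri = hd_tri[OF _ _ _ _ _ _]
  show ?thesis
  proof (cases "K = {}")
    case K: True
    show ?thesis
    proof (cases "M = {}")
      case True then show ?thesis using K nn by (simp add: hat_dH_def)
    next
      case M: False
      show ?thesis
      proof (cases "L = {}")
        case True then show ?thesis using K M nn by (simp add: hat_dH_def)
      next
        case L: False
        have "hausdorff_dist M {0} \<le> hausdorff_dist M L + hausdorff_dist L {0}"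
          using tri[of M L "{0}"] assms M L c0 by blast
        moreover have "0 \<le> hausdorff_dist L M" using hd_nonneg[of L M] assms L compact_imp_bounded by blast
        ultimately show ?thesis using K M L
          by (simp add: hat_dH_def hd_sym[of M L]) linarith
      qed
    qed
  next
    case K: False
    show ?thesis
    proof (cases "M = {}")
      case M: True
      show ?thesis
      proof (cases "L = {}")
        case True then show ?thesis using K M nn by (simp add: hat_dH_def)
      next
        case L: False
        have "hausdorff_dist K {0} \<le> hausdorff_dist K L + hausdorff_dist L {0}"
          using tri[of K L "{0}"] assms K L c0 by blast
        moreover have "0 \<le> hausdorff_dist K L" using hd_nonneg[of K L] assms K compact_imp_bounded by blast
        ultimately show ?thesis using K M L
          by (simp add: hat_dH_def) linarith
      qed
    next
      case M: False
      show ?thesis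
      proof (cases "L = {}")
        case L: True
        have "hausdorff_dist K M \<le> hausdorff_dist K {0} + hausdorff_dist {0} M"
          using tri[of K "{0}" M] assms K M c0 by blast
        then show ?thesis using K M L
          by (simp add: hat_dH_def hd_sym[of "{0}" M])
      next
        case L: False
        show ?thesis using K M L tri[of K L M] assms by (simp add: hat_dH_def)
      qed
    qed
  qed
qed

lemma M0D:
  assumes "\<zeta> \<in> M0"
  shows "continuous_on UNIV \<zeta>" "\<And>s t. s < t \<Longrightarrow> \<zeta> t < \<zeta> s" "\<And>t. 0 < \<zeta> t"
    "(\<integral>\<^sup>+ t\<in>{0..}. ennreal (\<zeta> t) \<partial>lborel) < \<infinity>"
  using assms by (auto simp: M0_def)

lemma zeta_le: "\<zeta> \<in> M0 \<Longrightarrow> s \<le> t \<Longrightarrow> \<zeta> t \<le> \<zeta> s"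
  using M0D(2)[of \<zeta> s t] by (cases "s = t") auto

lemma zeta_ext_nonneg: "\<zeta> \<in> M0 \<Longrightarrow> 0 \<le> zeta_ext \<zeta> a"
  using M0D(3)[of \<zeta>] by (cases a) (auto simp: zeta_ext_def less_imp_le)

lemma zeta_small:
  assumes z: "\<zeta> \<in> M0" and s: "0 < s"
  shows "\<exists>T. \<zeta> T < s"
proof (rule ccontr)
  assume "\<not> ?thesis"
  then have ge: "\<And>T. s \<le> \<zeta> T" by (simp add: not_less)
  obtain r where r: "(\<integral>\<^sup>+ t\<in>{0..}. ennreal (\<zeta> t) \<partial>lborel) = ennreal r" "0 \<le> r"
    using M0D(4)[OF z] by (cases "(\<integral>\<^sup>+ t\<in>{0..}. ennreal (\<zeta> t) \<partial>lborel)" rule: ennreal_cases) auto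
  have "ennreal (s * n) \<le> ennreal r" for n :: nat
  proof -
    have "ennreal (s * n) = (\<integral>\<^sup>+ t. ennreal s * indicator {0..real n} t \<partial>lborel)"
      using s by (simp add: nn_integral_cmult_indicator ennreal_mult)
    also have "\<dots> \<le> (\<integral>\<^sup>+ t\<in>{0..}. ennreal (\<zeta> t) \<partial>lborel)"
      by (intro nn_integral_mono) (auto simp: indicator_def ge ennreal_leI)
    finally show ?thesis using r by simp
  qed
  then have "s * n \<le> r" for n :: nat using r(2) by (simp add: ennreal_le_iff)
  moreover obtain n :: nat where "r / s < n" using reals_Archimedean2 by blast
  moreover have "r < s * n" using \<open>r / s < n\<close> s by (simp add: field_simps)
  ultimately show False by (meson not_less)
qed

lemma lsc_open:
  assumes "lsc_fun u" shows "open {x. t < u x}"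
proof (rule open_subopen[THEN iffD2], intro ballI)
  fix x assume x: "x \<in> {x. t < u x}"
  then have "t < u x" by simp
  then have ev: "\<forall>\<^sub>F y in at x. t < u y" using assms unfolding lsc_fun_def by blast
  obtain S where S: "open S" "x \<in> S" "\<And>y. y \<in> S \<Longrightarrow> y \<noteq> x \<Longrightarrow> t < u y"
    using ev[unfolded eventually_at_topological] by auto
  have "S \<subseteq> {x. t < u x}"
  proof
    fix y assume "y \<in> S" then show "y \<in> {x. t < u x}" using S(3)[of y] \<open>t < u x\<close> by (cases "y = x") auto
  qed
  then show "\<exists>T. open T \<and> x \<in> T \<and> T \<subseteq> {x. t < u x}" using S by blast
qed

lemma super_anti: "s \<le> s' \<Longrightarrow> superlevel \<zeta> u s' \<subseteq> superlevel \<zeta> u s"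
  by (auto simp: superlevel_def)

lemma super_nonpos: "\<zeta> \<in> M0 \<Longrightarrow> s \<le> 0 \<Longrightarrow> superlevel \<zeta> u s = UNIV"
proof -
  assume "\<zeta> \<in> M0" "s \<le> 0"
  then have "\<And>x. s \<le> zeta_ext \<zeta> (u x)" using zeta_ext_nonneg[of \<zeta>] by (meson order_trans)
  then show ?thesis by (simp add: superlevel_def)
qed

lemma super_closed:
  assumes z: "\<zeta> \<in> M0" and u: "lsc_fun u" "proper_fun u" and s: "0 < s"
  shows "closed (superlevel \<zeta> u s)"
proof -
  have eq: "- superlevel \<zeta> u s = (\<Union>T\<in>{T. \<zeta> T < s}. {x. ereal T < u x})"
  proof (intro equalityI subsetI)
    fix x assume "x \<in> - superlevel \<zeta> u s"
    then have lt: "zeta_ext \<zeta> (u x) < s" by (auto simp: superlevel_def)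
    show "x \<in> (\<Union>T\<in>{T. \<zeta> T < s}. {x. ereal T < u x})"
    proof (cases "u x")
      case (real r)
      then have "\<zeta> r < s" using lt by (simp add: zeta_ext_def)
      have "isCont \<zeta> r" using M0D(1)[OF z] by (simp add: continuous_on_eq_continuous_at)
      then have "\<forall>\<^sub>F y in at r. \<zeta> y < s" using \<open>\<zeta> r < s\<close>
        by (simp add: isCont_def order_tendstoD(2))
      then have "\<forall>\<^sub>F y in at_left r. \<zeta> y < s" by (simp add: eventually_at_split)
      then obtain b where "b < r" "\<And>y. b < y \<Longrightarrow> y < r \<Longrightarrow> \<zeta> y < s"
        by (auto simp: eventually_at_left_field)
      then have "\<zeta> ((b + r)/2) < s" "ereal ((b+r)/2) < u x" using real by auto
      then show ?thesis by blast
    next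
      case PInf
      obtain T where "\<zeta> T < s" using zeta_small[OF z s] by blast
      then show ?thesis using PInf by auto
    next
      case MInf then show ?thesis using u(2) by (simp add: proper_fun_def)
    qed
  next
    fix x assume "x \<in> (\<Union>T\<in>{T. \<zeta> T < s}. {x. ereal T < u x})"
    then obtain T where T: "\<zeta> T < s" "ereal T < u x" by blast
    show "x \<in> - superlevel \<zeta> u s"
    proof (cases "u x")
      case (real r)
      then have "\<zeta> r < \<zeta> T" using T M0D(2)[OF z] by simp
      then show ?thesis using real T by (simp add: superlevel_def zeta_ext_def)
    qed (use T s in \<open>auto simp: superlevel_def zeta_ext_def\<close>)
  qed
  have "open (- superlevel \<zeta> u s)" unfolding eq by (intro open_UN ballI lsc_open[OF u(1)])
  then show ?thesis by (simp only: closed_open)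
qed

lemma lsc_bdd_below_compact:
  fixes u :: "'a::topological_space \<Rightarrow> ereal"
  assumes u: "lsc_fun u" "\<And>x. u x \<noteq> -\<infinity>" and S: "compact S"
  shows "\<exists>b. \<forall>x\<in>S. ereal (- b) \<le> u x"
proof -
  have cov: "S \<subseteq> (\<Union>n\<in>(UNIV::nat set). {x. ereal (- real n) < u x})"
  proof
    fix x assume "x \<in> S"
    show "x \<in> (\<Union>n\<in>(UNIV::nat set). {x. ereal (- real n) < u x})"
    proof (cases "u x")
      case (real r)
      obtain n :: nat where "- r < n" using reals_Archimedean2 by blast
      then have "ereal (- real n) < u x" using real by simp
      then show ?thesis by blast
    next
      case PInf
      then have "ereal (- real 0) < u x" by simp
      then show ?thesis by blast
    qed (use u(2) in auto)
  qed
  obtain C' where C': "C' \<subseteq> (UNIV::nat set)" "finite C'" "S \<subseteq> (\<Union>n\<in>C'. {x. ereal (- real n) < u x})"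
    using compactE_image[OF S, of UNIV "\<lambda>n. {x. ereal (- real n) < u x}"] lsc_open[OF u(1)] cov
    by blast
  define N where "N = Max (insert 0 C')"
  have "ereal (- real N) \<le> u x" if xS: "x \<in> S" for x
  proof -
    obtain n where n: "n \<in> C'" "ereal (- real n) < u x" using C'(3) xS by blast
    have "n \<le> N" unfolding N_def using n(1) C'(2) by simp
    then have "ereal (- real N) \<le> ereal (- real n)" by simp
    then show ?thesis using n(2) by (meson less_imp_le order_trans)
  qed
  then show ?thesis by blast
qed

lemma linear_growth:
  fixes u :: "'a::euclidean_space \<Rightarrow> ereal"
  assumes uC: "u \<in> Conv_coe"
  shows "\<exists>A>0. \<exists>B. \<forall>x. ereal (A * norm x - B) \<le> u x"
proof -
  have pr: "proper_fun u" and ls: "lsc_fun u" and cv: "convex_fun u" and co: "coercive_fun u"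
    using uC by (auto simp: Conv_coe_def)
  have nm: "\<And>x. u x \<noteq> -\<infinity>" using pr by (simp add: proper_fun_def)
  obtain x0 where "u x0 \<noteq> \<infinity>" using pr by (auto simp: proper_fun_def)
  then obtain c where c: "u x0 = ereal c" using nm[of x0] by (cases "u x0") auto
  have "\<forall>\<^sub>F x in at_infinity. ereal (c + 1) < u x"
    using co unfolding coercive_fun_def by (rule order_tendstoD(1)) simp
  then obtain b0 where b0: "\<And>x. b0 \<le> norm x \<Longrightarrow> ereal (c + 1) < u x"
    unfolding eventually_at_infinity by blast
  define \<rho> where "\<rho> = max b0 0 + norm x0 + 1"
  have \<rho>: "0 < \<rho>" unfolding \<rho>_def by (simp add: add_nonneg_pos)
  obtain b where b0': "\<forall>x\<in>cball x0 \<rho>. ereal (- b) \<le> u x"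
    using lsc_bdd_below_compact[OF ls nm compact_cball[of x0 \<rho>]] by blast
  have b: "\<And>x. x \<in> cball x0 \<rho> \<Longrightarrow> ereal (- b) \<le> u x" using b0' by blast
  have far: "ereal (c + dist x x0 / \<rho>) \<le> u x" if d: "\<rho> \<le> dist x x0" for x
  proof -
    define d where "d = dist x x0"
    have dpos: "0 < d" using d \<rho> unfolding d_def by linarith
    define l where "l = \<rho> / d"
    have l: "0 < l" "l \<le> 1" using \<rho> dpos d unfolding l_def d_def by auto
    define y where "y = l *\<^sub>R x + (1 - l) *\<^sub>R x0"
    have "y - x0 = l *\<^sub>R (x - x0)" unfolding y_def by (simp add: algebra_simps)
    then have "norm (y - x0) = l * d" using l by (simp add: d_def dist_norm)
    also have "\<dots> = \<rho>" unfolding l_def using dpos by simp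
    finally have "norm (y - x0) = \<rho>" .
    then have "\<rho> - norm x0 \<le> norm y" using norm_triangle_ineq4[of y x0] by simp
    then have "b0 \<le> norm y" unfolding \<rho>_def by linarith
    then have uy: "ereal (c + 1) < u y" by (rule b0)
    show ?thesis
    proof (cases "l = 1")
      case True
      then have "y = x" "d = \<rho>" unfolding y_def l_def using dpos by auto
      then show ?thesis using uy \<rho> unfolding d_def by simp
    next
      case False
      then have l1: "l < 1" using l by simp
      have "u y \<le> ereal l * u x + ereal (1 - l) * u x0"
        using cv l l1 unfolding convex_fun_def y_def by blast
      show ?thesis
      proof (cases "u x")
        case PInf then show ?thesis by simp
      next
        case MInf then show ?thesis using nm by simp
      next
        case (real r)
        have "u y \<le> ereal (l * r + (1 - l) * c)" using \<open>u y \<le> _\<close> real c by simp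
        then have "ereal (c + 1) < ereal (l * r + (1 - l) * c)" by (rule less_le_trans[OF uy])
        then have "c + 1 < l * r + (1 - l) * c" by simp
        then have "1 < l * (r - c)" by (simp add: algebra_simps)
        then have "1 / l < r - c" using l by (simp add: field_simps)
        moreover have "1 / l = d / \<rho>" unfolding l_def by simp
        ultimately show ?thesis using real unfolding d_def by simp
      qed
    qed
  qed
  define A where "A = 1 / \<rho>"
  define B where "B = max (norm x0 / \<rho> - c) ((\<rho> + norm x0) / \<rho> + b)"
  have "ereal (A * norm x - B) \<le> u x" for x
  proof (cases "\<rho> \<le> dist x x0")
    case True
    have "norm x - norm x0 \<le> dist x x0" using norm_triangle_ineq2[of x x0] by (simp add: dist_norm)
    then have "(norm x - norm x0) / \<rho> \<le> dist x x0 / \<rho>" using \<rho> by (simp add: divide_right_mono)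
    then have "A * norm x - B \<le> c + dist x x0 / \<rho>"
      unfolding A_def B_def by (simp add: diff_divide_distrib)
    then show ?thesis using far[OF True] by (meson ereal_less_eq(3) order_trans)
  next
    case False
    then have xb: "x \<in> cball x0 \<rho>" by (simp add: dist_commute)
    have "norm x \<le> norm x0 + \<rho>" using False norm_triangle_ineq2[of x x0] by (simp add: dist_norm)
    then have "A * norm x \<le> (\<rho> + norm x0) / \<rho>" unfolding A_def using \<rho>
      by (simp add: divide_right_mono)
    then have "A * norm x - B \<le> - b" unfolding B_def by simp
    then show ?thesis using b[OF xb] by (meson ereal_less_eq(3) order_trans)
  qed
  moreover have "0 < A" unfolding A_def using \<rho> by simp
  ultimately show ?thesis by blast
qed

lemma super_bound:
  assumes z: "\<zeta> \<in> M0" and g: "\<And>x. ereal (A * norm x - B) \<le> u x" and s: "0 < s"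
    and x: "x \<in> superlevel \<zeta> u s"
  shows "s \<le> \<zeta> (A * norm x - B)"
proof -
  have le: "s \<le> zeta_ext \<zeta> (u x)" using x by (simp add: superlevel_def)
  show ?thesis
  proof (cases "u x")
    case (real r)
    then have "A * norm x - B \<le> r" using g[of x] by simp
    then have "\<zeta> r \<le> \<zeta> (A * norm x - B)" using zeta_le[OF z] by blast
    then show ?thesis using le real by (simp add: zeta_ext_def)
  qed (use le s in \<open>auto simp: zeta_ext_def\<close>)
qed

lemma super_bounded_norm:
  assumes z: "\<zeta> \<in> M0" and g: "\<And>x. ereal (A * norm x - B) \<le> u x" and A: "0 < A" and s: "0 < s"
  shows "\<exists>R. \<forall>x\<in>superlevel \<zeta> u s. norm x \<le> R"
proof -
  obtain T where T: "\<zeta> T < s" using zeta_small[OF z s] by blast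
  have "norm x \<le> (T + B) / A" if "x \<in> superlevel \<zeta> u s" for x
  proof -
    have "s \<le> \<zeta> (A * norm x - B)" by (rule super_bound[OF z g s that])
    then have "A * norm x - B < T" using T zeta_le[OF z, of T "A * norm x - B"] by (meson not_le order_trans not_less)
    then show ?thesis using A by (simp add: field_simps)
  qed
  then show ?thesis by blast
qed

lemma super_compact:
  fixes u :: "'a::euclidean_space \<Rightarrow> ereal"
  assumes z: "\<zeta> \<in> M0" and uC: "u \<in> Conv_coe" and s: "0 < s"
  shows "compact (superlevel \<zeta> u s)"
proof -
  obtain A B where A: "0 < A" and g: "\<And>x. ereal (A * norm x - B) \<le> u x"
    using linear_growth[OF uC] by blast
  obtain R where "\<forall>x\<in>superlevel \<zeta> u s. norm x \<le> R" using super_bounded_norm[OF z g A s] by blast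
  then have "bounded (superlevel \<zeta> u s)" by (auto simp: bounded_iff)
  moreover have "closed (superlevel \<zeta> u s)"
    using super_closed[OF z _ _ s] uC by (auto simp: Conv_coe_def)
  ultimately show ?thesis by (simp add: compact_eq_bounded_closed)
qed

lemma empty_set_borel:
  fixes K :: "real \<Rightarrow> 'a set"
  assumes anti: "\<And>s s'. s \<le> s' \<Longrightarrow> K s' \<subseteq> K s"
  shows "{s. K s = {}} \<in> sets borel"
proof -
  define f where "f s = (if K s = {} then 1 else 0::real)" for s
  have "mono f" unfolding mono_def f_def using anti by fastforce
  then have "f \<in> borel_measurable borel" by (rule borel_measurable_mono)
  then have "f -` {1} \<inter> space borel \<in> sets borel" by (rule measurable_sets) simp
  moreover have "f -` {1} \<inter> space borel = {s. K s = {}}" by (auto simp: f_def split: if_splits)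
  ultimately show ?thesis by simp
qed

lemma edir_D:
  fixes K L :: "'a::euclidean_space set"
  assumes K: "compact K" "K \<noteq> {}" and L: "L \<noteq> {}"
    and D: "\<And>X. open X \<Longrightarrow> X \<noteq> {} \<Longrightarrow> \<exists>d\<in>D. d \<in> X"
  shows "bdd_above ((\<lambda>y. infdist y L - infdist y K) ` D)"
    and "edir K L = (SUP y\<in>D. infdist y L - infdist y K)"
proof -
  have a: "infdist y L - infdist y K \<le> edir K L" for y
  proof -
    obtain k where k: "k \<in> K" "infdist y K = dist y k"
      using infdist_attains_inf[of K y] K compact_imp_closed by blast
    have "infdist y L \<le> infdist k L + dist y k" by (rule infdist_triangle)
    moreover have "infdist k L \<le> edir K L" using edir_upper[of K k L] K k compact_imp_bounded by blast
    ultimately show ?thesis using k by simp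
  qed
  then show bdd: "bdd_above ((\<lambda>y. infdist y L - infdist y K) ` D)" by (intro bdd_aboveI2 a)
  have Dne: "D \<noteq> {}" using D[of UNIV] by auto
  show "edir K L = (SUP y\<in>D. infdist y L - infdist y K)"
  proof (rule antisym)
    show "(SUP y\<in>D. infdist y L - infdist y K) \<le> edir K L"
      using Dne a by (simp add: cSUP_least)
    show "edir K L \<le> (SUP y\<in>D. infdist y L - infdist y K)"
    proof (rule edir_least[OF K(2)])
      fix x assume x: "x \<in> K"
      show "infdist x L \<le> (SUP y\<in>D. infdist y L - infdist y K)"
      proof (rule field_le_epsilon)
        fix e :: real assume e: "0 < e"
        obtain d where d: "d \<in> D" "d \<in> ball x (e/2)" using D[of "ball x (e/2)"] e by auto
        have "infdist x L \<le> infdist d L + dist x d" by (rule infdist_triangle)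
        moreover have "infdist d K \<le> dist d x" using x by (rule infdist_le)
        moreover have "dist x d < e/2" using d by simp
        moreover have "infdist d L - infdist d K \<le> (SUP y\<in>D. infdist y L - infdist y K)"
          using bdd d(1) by (rule cSUP_upper2) simp
        ultimately show "infdist x L \<le> (SUP y\<in>D. infdist y L - infdist y K) + e"
          by (simp add: dist_commute)
      qed
    qed
  qed
qed

lemma hd_meas:
  fixes K L :: "real \<Rightarrow> 'a::euclidean_space set"
  assumes antiK: "\<And>s s'. s \<le> s' \<Longrightarrow> K s' \<subseteq> K s" and antiL: "\<And>s s'. s \<le> s' \<Longrightarrow> L s' \<subseteq> L s"
    and cK: "\<And>s. 0 < s \<Longrightarrow> compact (K s)" and cL: "\<And>s. 0 < s \<Longrightarrow> compact (L s)"
  shows "(\<lambda>s. if 0 < s \<and> K s \<noteq> {} \<and> L s \<noteq> {} then hausdorff_dist (K s) (L s) else 0)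
           \<in> borel_measurable borel"
proof -
  obtain D :: "'a set" where D: "countable D" "\<forall>X. open X \<longrightarrow> X \<noteq> {} \<longrightarrow> (\<exists>d\<in>D. d \<in> X)"
    using countable_dense_exists by blast
  have D': "\<And>X. open X \<Longrightarrow> X \<noteq> {} \<Longrightarrow> \<exists>d\<in>D. d \<in> X" using D(2) by simp
  define A where "A = {s. 0 < s \<and> K s \<noteq> {} \<and> L s \<noteq> {}}"
  have A_eq: "A = {0<..} \<inter> (UNIV - {s. K s = {}}) \<inter> (UNIV - {s. L s = {}})"
    unfolding A_def by auto
  have A0: "A \<in> sets borel"
    using empty_set_borel[OF antiK] empty_set_borel[OF antiL] unfolding A_eq
    by (intro sets.Int sets.Diff) auto
  have Aset: "{s \<in> space borel. 0 < s \<and> K s \<noteq> {} \<and> L s \<noteq> {}} \<in> sets borel"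
    using A0 unfolding A_def by simp
  have Ai: "0 < s" "K s \<noteq> {}" "L s \<noteq> {}" if "s \<in> A" for s using that unfolding A_def by auto
  have monoK: "mono_on A (\<lambda>s. infdist y (K s))" for y
    by (rule mono_onI) (auto simp: A_def intro!: infdist_mono antiK)
  have monoL: "mono_on A (\<lambda>s. infdist y (L s))" for y
    by (rule mono_onI) (auto simp: A_def intro!: infdist_mono antiL)
  define F1 where "F1 s = (SUP y\<in>D. infdist y (L s) - infdist y (K s))" for s
  define F2 where "F2 s = (SUP y\<in>D. infdist y (K s) - infdist y (L s))" for s
  have mF1: "F1 \<in> borel_measurable (restrict_space borel A)"
    unfolding F1_def
  proof (rule borel_measurable_cSUP[OF D(1)])
    fix y show "(\<lambda>s. infdist y (L s) - infdist y (K s)) \<in> borel_measurable (restrict_space borel A)"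
      using borel_measurable_mono_on_fnc[OF monoK] borel_measurable_mono_on_fnc[OF monoL] by simp
  next
    fix s assume "s \<in> space (restrict_space borel A)"
    then have "s \<in> A" by (simp add: space_restrict_space)
    then show "bdd_above ((\<lambda>y. infdist y (L s) - infdist y (K s)) ` D)"
      using edir_D(1)[OF cK _ _ D', of s "L s"] Ai by simp
  qed
  have mF2: "F2 \<in> borel_measurable (restrict_space borel A)"
    unfolding F2_def
  proof (rule borel_measurable_cSUP[OF D(1)])
    fix y show "(\<lambda>s. infdist y (K s) - infdist y (L s)) \<in> borel_measurable (restrict_space borel A)"
      using borel_measurable_mono_on_fnc[OF monoK] borel_measurable_mono_on_fnc[OF monoL] by simp
  next
    fix s assume "s \<in> space (restrict_space borel A)"
    then have "s \<in> A" by (simp add: space_restrict_space)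
    then show "bdd_above ((\<lambda>y. infdist y (K s) - infdist y (L s)) ` D)"
      using edir_D(1)[OF cL _ _ D', of s "K s"] Ai by simp
  qed
  have m: "(\<lambda>s. max (F1 s) (F2 s)) \<in> borel_measurable (restrict_space borel A)"
    by (rule borel_measurable_max[OF mF2 mF1])
  have "(\<lambda>s. hausdorff_dist (K s) (L s)) \<in> borel_measurable (restrict_space borel A)"
  proof (subst measurable_cong)
    fix s assume "s \<in> space (restrict_space borel A)"
    then have s: "s \<in> A" by (simp add: space_restrict_space)
    have e1: "edir (K s) (L s) = F1 s" unfolding F1_def
      using edir_D(2)[OF cK _ _ D', of s "L s"] Ai[OF s] by simp
    have e2: "edir (L s) (K s) = F2 s" unfolding F2_def
      using edir_D(2)[OF cL _ _ D', of s "K s"] Ai[OF s] by simp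
    show "hausdorff_dist (K s) (L s) = max (F1 s) (F2 s)"
      unfolding hd_edir e1 e2 ..
  qed (rule m)
  then show ?thesis
    using Aset unfolding A_def
    by (subst measurable_If_restrict_space_iff) auto
qed

lemma hat_meas:
  fixes K L :: "real \<Rightarrow> 'a::euclidean_space set"
  assumes antiK: "\<And>s s'. s \<le> s' \<Longrightarrow> K s' \<subseteq> K s" and antiL: "\<And>s s'. s \<le> s' \<Longrightarrow> L s' \<subseteq> L s"
    and cK: "\<And>s. 0 < s \<Longrightarrow> compact (K s)" and cL: "\<And>s. 0 < s \<Longrightarrow> compact (L s)"
  shows "(\<lambda>s. if 0 < s then hat_dH (K s) (L s) else 0) \<in> borel_measurable borel"
proof -
  define Z :: "real \<Rightarrow> 'a set" where "Z s = {0}" for s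
  have aZ: "\<And>s s'. s \<le> s' \<Longrightarrow> Z s' \<subseteq> Z s" and cZ: "\<And>s. 0 < s \<Longrightarrow> compact (Z s)"
    by (auto simp: Z_def)
  note m1 = hd_meas[OF antiK antiL cK cL] and m2 = hd_meas[OF antiK aZ cK cZ] and m3 = hd_meas[OF antiL aZ cL cZ]
  have eK: "{s. K s = {}} \<in> sets borel" by (rule empty_set_borel[OF antiK])
  have eL: "{s. L s = {}} \<in> sets borel" by (rule empty_set_borel[OF antiL])
  have pos: "{0::real<..} \<in> sets borel" by simp
  have S1: "{s \<in> space borel. 0 < s \<and> K s \<noteq> {} \<and> L s \<noteq> {}} \<in> sets borel"
  proof -
    have "{s \<in> space borel. 0 < s \<and> K s \<noteq> {} \<and> L s \<noteq> {}} = {0<..} \<inter> (UNIV - {s. K s = {}}) \<inter> (UNIV - {s. L s = {}})" by auto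
    moreover have "{0<..} \<inter> (UNIV - {s. K s = {}}) \<inter> (UNIV - {s. L s = {}}) \<in> sets borel" using eK eL pos by (intro sets.Int sets.Diff) auto
    ultimately show ?thesis by simp
  qed
  have S2: "{s \<in> space borel. 0 < s \<and> K s \<noteq> {} \<and> L s = {}} \<in> sets borel"
  proof -
    have "{s \<in> space borel. 0 < s \<and> K s \<noteq> {} \<and> L s = {}} = {0<..} \<inter> (UNIV - {s. K s = {}}) \<inter> {s. L s = {}}" by auto
    moreover have "{0<..} \<inter> (UNIV - {s. K s = {}}) \<inter> {s. L s = {}} \<in> sets borel" using eK eL pos by (intro sets.Int sets.Diff) auto
    ultimately show ?thesis by simp
  qed
  have S3: "{s \<in> space borel. 0 < s \<and> K s = {} \<and> L s \<noteq> {}} \<in> sets borel"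
  proof -
    have "{s \<in> space borel. 0 < s \<and> K s = {} \<and> L s \<noteq> {}} = {0<..} \<inter> {s. K s = {}} \<inter> (UNIV - {s. L s = {}})" by auto
    moreover have "{0<..} \<inter> {s. K s = {}} \<inter> (UNIV - {s. L s = {}}) \<in> sets borel" using eK eL pos by (intro sets.Int sets.Diff) auto
    ultimately show ?thesis by simp
  qed
  let ?h1 = "\<lambda>s. if 0 < s \<and> K s \<noteq> {} \<and> L s \<noteq> {} then hausdorff_dist (K s) (L s) else 0"
  let ?h2 = "\<lambda>s. if 0 < s \<and> K s \<noteq> {} \<and> Z s \<noteq> {} then hausdorff_dist (K s) (Z s) else 0"
  let ?h3 = "\<lambda>s. if 0 < s \<and> L s \<noteq> {} \<and> Z s \<noteq> {} then hausdorff_dist (L s) (Z s) else 0"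
  have eq: "(\<lambda>s. if 0 < s then hat_dH (K s) (L s) else 0) =
    (\<lambda>s. if 0 < s \<and> K s \<noteq> {} \<and> L s \<noteq> {} then ?h1 s else
         (if 0 < s \<and> K s \<noteq> {} \<and> L s = {} then max 1 (?h2 s) else
         (if 0 < s \<and> K s = {} \<and> L s \<noteq> {} then max 1 (?h3 s) else 0)))"
    by (rule ext) (auto simp: hat_dH_def Z_def)
  have "(\<lambda>s. if 0 < s \<and> K s \<noteq> {} \<and> L s \<noteq> {} then ?h1 s else
         (if 0 < s \<and> K s \<noteq> {} \<and> L s = {} then max 1 (?h2 s) else
         (if 0 < s \<and> K s = {} \<and> L s \<noteq> {} then max 1 (?h3 s) else 0))) \<in> borel_measurable borel"
    by (intro measurable_If m1 borel_measurable_max m2 m3 S1 S2 S3 borel_measurable_const)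
  then show ?thesis unfolding eq .
qed

lemma zeta_meas: "\<zeta> \<in> M0 \<Longrightarrow> \<zeta> \<in> borel_measurable borel"
  using M0D(1) borel_measurable_continuous_onI by blast

lemma zeta_tail_finite:
  assumes z: "\<zeta> \<in> M0"
  shows "(\<integral>\<^sup>+ t. ennreal (\<zeta> t) * indicator {-B..} t \<partial>lborel) < \<infinity>"
proof -
  have zm[measurable]: "\<zeta> \<in> borel_measurable borel" by (rule zeta_meas[OF z])
  define b where "b = \<bar>B\<bar>"
  have b: "0 \<le> b" "-b \<le> -B" unfolding b_def by auto
  have "(\<integral>\<^sup>+ t. ennreal (\<zeta> t) * indicator {-B..} t \<partial>lborel)
        \<le> (\<integral>\<^sup>+ t. ennreal (\<zeta> (-b)) * indicator {-b..0} t + ennreal (\<zeta> t) * indicator {0..} t \<partial>lborel)"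
  proof (rule nn_integral_mono)
    fix t :: real
    show "ennreal (\<zeta> t) * indicator {-B..} t \<le> ennreal (\<zeta> (-b)) * indicator {-b..0} t + ennreal (\<zeta> t) * indicator {0..} t"
    proof (cases "0 \<le> t")
      case True then show ?thesis by (simp add: indicator_def)
    next
      case False
      show ?thesis
      proof (cases "-B \<le> t")
        case True
        then have "-b \<le> t" using b by linarith
        then have "\<zeta> t \<le> \<zeta> (-b)" using zeta_le[OF z] by blast
        then show ?thesis using True False \<open>-b \<le> t\<close> by (simp add: indicator_def ennreal_leI)
      qed (simp add: indicator_def)
    qed
  qed
  also have "\<dots> = (\<integral>\<^sup>+ t. ennreal (\<zeta> (-b)) * indicator {-b..0} t \<partial>lborel) + (\<integral>\<^sup>+ t. ennreal (\<zeta> t) * indicator {0..} t \<partial>lborel)"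
    by (rule nn_integral_add) auto
  also have "\<dots> = ennreal (\<zeta> (-b)) * ennreal b + (\<integral>\<^sup>+ t\<in>{0..}. ennreal (\<zeta> t) \<partial>lborel)"
    using b by (simp add: nn_integral_cmult_indicator)
  also have "\<dots> < \<infinity>" using M0D(4)[OF z] by (simp add: ennreal_mult_eq_top_iff less_top[symmetric])
  finally show ?thesis .
qed

lemma rho_exists:
  fixes u :: "'a::euclidean_space \<Rightarrow> ereal"
  assumes z: "\<zeta> \<in> M0" and uC: "u \<in> Conv_coe"
  shows "\<exists>\<rho> C. \<rho> \<in> borel_measurable lborel \<and> (\<integral>\<^sup>+ s. \<rho> s \<partial>lborel) < \<infinity> \<and>
           (\<forall>s>0. \<forall>x\<in>superlevel \<zeta> u s. ennreal (norm x) \<le> \<rho> s \<and> s \<le> C)"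
proof -
  have zm[measurable]: "\<zeta> \<in> borel_measurable borel" by (rule zeta_meas[OF z])
  obtain A B where A: "0 < A" and g: "\<And>x. ereal (A * norm x - B) \<le> u x"
    using linear_growth[OF uC] by blast
  define E where "E = {p::real \<times> real. 0 < fst p \<and> -B \<le> snd p \<and> fst p \<le> \<zeta> (snd p)}"
  have o1: "open {p::real \<times> real. 0 < fst p}" by (intro open_Collect_less continuous_intros)
  have c2: "closed {p::real \<times> real. -B \<le> snd p}" by (intro closed_Collect_le continuous_intros)
  have cz: "continuous_on UNIV (\<lambda>p::real \<times> real. \<zeta> (snd p))"
    using continuous_on_compose2[OF M0D(1)[OF z] continuous_on_snd[OF continuous_on_id]] by simp
  have c3: "closed {p::real \<times> real. fst p \<le> \<zeta> (snd p)}"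
    by (intro closed_Collect_le continuous_intros cz)
  have "E = {p::real \<times> real. 0 < fst p} \<inter> {p. -B \<le> snd p} \<inter> {p. fst p \<le> \<zeta> (snd p)}"
    unfolding E_def by auto
  then have Eb: "E \<in> sets borel" using o1 c2 c3 by (simp add: borel_open borel_closed sets.Int)
  have Em: "(\<lambda>(s, t). indicator E (s, t) :: ennreal) \<in> borel_measurable (lborel \<Otimes>\<^sub>M lborel)"
    unfolding lborel_prod measurable_lborel1 using Eb by simp
  define \<rho>0 where "\<rho>0 s = (\<integral>\<^sup>+ t. indicator E (s, t) \<partial>lborel)" for s
  have \<rho>0m: "\<rho>0 \<in> borel_measurable lborel"
    unfolding \<rho>0_def by (rule lborel.borel_measurable_nn_integral) (use Em in simp)
  have "(\<integral>\<^sup>+ s. \<rho>0 s \<partial>lborel) = (\<integral>\<^sup>+ t. (\<integral>\<^sup>+ s. indicator E (s, t) \<partial>lborel) \<partial>lborel)"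
    unfolding \<rho>0_def by (rule lborel_pair.Fubini'[symmetric]) (use Em in simp)
  also have "\<dots> = (\<integral>\<^sup>+ t. ennreal (\<zeta> t) * indicator {-B..} t \<partial>lborel)"
  proof (rule nn_integral_cong)
    fix t :: real
    have "(\<lambda>s. indicator E (s, t) :: ennreal) = (\<lambda>s. indicator {0<..\<zeta> t} s * indicator {-B..} t)"
      by (auto simp: E_def indicator_def)
    then have "(\<integral>\<^sup>+ s. indicator E (s, t) \<partial>lborel) = (\<integral>\<^sup>+ s. indicator {0<..\<zeta> t} s \<partial>lborel) * indicator {-B..} t"
      by (simp add: nn_integral_multc)
    also have "\<dots> = ennreal (\<zeta> t) * indicator {-B..} t"
      using M0D(3)[OF z, of t] by simp
    finally show "(\<integral>\<^sup>+ s. indicator E (s, t) \<partial>lborel) = ennreal (\<zeta> t) * indicator {-B..} t" .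
  qed
  finally have int\<rho>0: "(\<integral>\<^sup>+ s. \<rho>0 s \<partial>lborel) < \<infinity>" using zeta_tail_finite[OF z, of B] by simp
  define \<rho> where "\<rho> s = \<rho>0 s * ennreal (1 / A)" for s
  have "\<rho> \<in> borel_measurable lborel" unfolding \<rho>_def using \<rho>0m by simp
  moreover have "(\<integral>\<^sup>+ s. \<rho> s \<partial>lborel) < \<infinity>"
    unfolding \<rho>_def using int\<rho>0 \<rho>0m by (simp add: nn_integral_multc ennreal_mult_less_top)
  moreover have "ennreal (norm x) \<le> \<rho> s \<and> s \<le> \<zeta> (-B)" if s: "0 < s" and x: "x \<in> superlevel \<zeta> u s" for s x
  proof
    have sb: "s \<le> \<zeta> (A * norm x - B)" by (rule super_bound[OF z g s x])
    have "-B \<le> A * norm x - B" using A by simp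
    then have "\<zeta> (A * norm x - B) \<le> \<zeta> (-B)" using zeta_le[OF z] by blast
    then show "s \<le> \<zeta> (-B)" using sb by linarith
    have "ennreal (A * norm x) = (\<integral>\<^sup>+ t. indicator {-B..A * norm x - B} t \<partial>lborel)"
      using A by simp
    also have "\<dots> \<le> \<rho>0 s" unfolding \<rho>0_def
    proof (rule nn_integral_mono)
      fix t :: real
      show "indicator {-B..A * norm x - B} t \<le> (indicator E (s, t) :: ennreal)"
      proof (cases "t \<in> {-B..A * norm x - B}")
        case True
        then have "\<zeta> (A * norm x - B) \<le> \<zeta> t" using zeta_le[OF z] by auto
        then have "(s, t) \<in> E" using True s sb by (auto simp: E_def)
        then show ?thesis using True by simp
      qed simp
    qed
    finally have h: "ennreal (A * norm x) \<le> \<rho>0 s" .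
    have "ennreal (norm x) = ennreal (A * norm x) * ennreal (1 / A)"
      using A by (simp add: ennreal_mult[symmetric])
    also have "\<dots> \<le> \<rho> s" unfolding \<rho>_def using h by (rule mult_right_mono) simp
    finally show "ennreal (norm x) \<le> \<rho> s" .
  qed
  ultimately show ?thesis by blast
qed

definition Gf :: "(real \<Rightarrow> real) \<Rightarrow> ('a::real_normed_vector \<Rightarrow> ereal) \<Rightarrow> ('a \<Rightarrow> ereal) \<Rightarrow> real \<Rightarrow> real" where
  "Gf \<zeta> u v s = (if 0 < s then hat_dH (superlevel \<zeta> u s) (superlevel \<zeta> v s) else 0)"

lemma hat_UNIV: "hat_dH (UNIV :: 'a::real_normed_vector set) UNIV = 0"
  by (simp add: hat_dH_def hausdorff_dist_def)

lemma delta_eq: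
  fixes u v :: "'a::euclidean_space \<Rightarrow> ereal"
  assumes z: "\<zeta> \<in> M0"
  shows "delta_H \<zeta> u v = (\<integral>\<^sup>+ s. ennreal (Gf \<zeta> u v s) \<partial>lborel)"
  unfolding delta_H_def
proof (rule nn_integral_cong)
  fix s :: real
  show "ennreal (hat_dH (superlevel \<zeta> u s) (superlevel \<zeta> v s)) * indicator {0..} s = ennreal (Gf \<zeta> u v s)"
  proof (cases "0 < s")
    case False
    then have "s \<le> 0" by simp
    then show ?thesis using super_nonpos[OF z, of s u] super_nonpos[OF z, of s v] False
      by (simp add: Gf_def hat_UNIV indicator_def)
  qed (simp add: Gf_def indicator_def)
qed

lemma Gf_meas:
  fixes u v :: "'a::euclidean_space \<Rightarrow> ereal"
  assumes z: "\<zeta> \<in> M0" and u: "u \<in> Conv_coe" and v: "v \<in> Conv_coe"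
  shows "(\<lambda>s. ennreal (Gf \<zeta> u v s)) \<in> borel_measurable lborel"
proof -
  have "(\<lambda>s. if 0 < s then hat_dH (superlevel \<zeta> u s) (superlevel \<zeta> v s) else 0) \<in> borel_measurable borel"
    by (rule hat_meas[OF super_anti super_anti super_compact[OF z u] super_compact[OF z v]])
  then have m[measurable]: "Gf \<zeta> u v \<in> borel_measurable borel" unfolding Gf_def[abs_def] .
  show ?thesis by measurable
qed

lemma Gf_nonneg:
  fixes u v :: "'a::euclidean_space \<Rightarrow> ereal"
  assumes z: "\<zeta> \<in> M0" and u: "u \<in> Conv_coe" and v: "v \<in> Conv_coe"
  shows "0 \<le> Gf \<zeta> u v s"
  unfolding Gf_def using hat_nonneg[OF super_compact[OF z u] super_compact[OF z v]] by simp

lemma Gf_sym: "Gf \<zeta> u v s = Gf \<zeta> v u s"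
  unfolding Gf_def using hat_sym by metis

lemma Gf_self:
  fixes u :: "'a::euclidean_space \<Rightarrow> ereal"
  assumes z: "\<zeta> \<in> M0" and u: "u \<in> Conv_coe"
  shows "Gf \<zeta> u u s = 0"
  unfolding Gf_def using hat_self[OF compact_imp_bounded[OF super_compact[OF z u]]] by simp

lemma Gf_tri:
  fixes u v w :: "'a::euclidean_space \<Rightarrow> ereal"
  assumes z: "\<zeta> \<in> M0" and u: "u \<in> Conv_coe" and v: "v \<in> Conv_coe" and w: "w \<in> Conv_coe"
  shows "Gf \<zeta> u w s \<le> Gf \<zeta> u v s + Gf \<zeta> v w s"
  unfolding Gf_def using hat_tri[OF super_compact[OF z u] super_compact[OF z v] super_compact[OF z w]] by simp

lemma Gf_zero:
  fixes u v :: "'a::euclidean_space \<Rightarrow> ereal"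
  assumes z: "\<zeta> \<in> M0" and u: "u \<in> Conv_coe" and v: "v \<in> Conv_coe" and s: "0 < s"
    and "Gf \<zeta> u v s = 0"
  shows "superlevel \<zeta> u s = superlevel \<zeta> v s"
  using hat_zero[OF super_compact[OF z u s] super_compact[OF z v s]] assms by (simp add: Gf_def)

lemma max_norm:
  fixes K :: "'a::euclidean_space set"
  assumes "compact K" "K \<noteq> {}"
  obtains xK where "xK \<in> K" "\<And>y. y \<in> K \<Longrightarrow> norm y \<le> norm xK"
  using continuous_attains_sup[OF assms continuous_on_norm_id] by blast

lemma Gf_finite:
  fixes u v :: "'a::euclidean_space \<Rightarrow> ereal"
  assumes z: "\<zeta> \<in> M0" and u: "u \<in> Conv_coe" and v: "v \<in> Conv_coe"
  shows "(\<integral>\<^sup>+ s. ennreal (Gf \<zeta> u v s) \<partial>lborel) < \<infinity>"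
proof -
  obtain \<rho>u Cu where \<rho>u: "\<rho>u \<in> borel_measurable lborel" "(\<integral>\<^sup>+ s. \<rho>u s \<partial>lborel) < \<infinity>"
    "\<And>s x. 0 < s \<Longrightarrow> x \<in> superlevel \<zeta> u s \<Longrightarrow> ennreal (norm x) \<le> \<rho>u s \<and> s \<le> Cu"
    using rho_exists[OF z u] by blast
  obtain \<rho>v Cv where \<rho>v: "\<rho>v \<in> borel_measurable lborel" "(\<integral>\<^sup>+ s. \<rho>v s \<partial>lborel) < \<infinity>"
    "\<And>s x. 0 < s \<Longrightarrow> x \<in> superlevel \<zeta> v s \<Longrightarrow> ennreal (norm x) \<le> \<rho>v s \<and> s \<le> Cv"
    using rho_exists[OF z v] by blast
  define C where "C = max Cu Cv"
  have pw: "ennreal (Gf \<zeta> u v s) \<le> indicator {0..C} s + \<rho>u s + \<rho>v s" for s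
  proof (cases "0 < s")
    case False then show ?thesis by (simp add: Gf_def)
  next
    case s: True
    define K where "K = superlevel \<zeta> u s"
    define L where "L = superlevel \<zeta> v s"
    have cK: "compact K" and cL: "compact L"
      unfolding K_def L_def using super_compact[OF z u s] super_compact[OF z v s] by auto
    have G: "Gf \<zeta> u v s = hat_dH K L" unfolding Gf_def K_def L_def using s by simp
    show ?thesis
    proof (cases "K = {}")
      case K: True
      show ?thesis
      proof (cases "L = {}")
        case True then show ?thesis using K G by (simp add: hat_dH_def)
      next
        case L: False
        obtain xL where xL: "xL \<in> L" "\<And>y. y \<in> L \<Longrightarrow> norm y \<le> norm xL" using max_norm[OF cL L] by blast
        have r: "ennreal (norm xL) \<le> \<rho>v s" "s \<le> Cv" using \<rho>v(3)[OF s, of xL] xL(1) unfolding L_def by auto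
        have "hausdorff_dist L {0} \<le> norm xL + 0" by (rule hd_bound) (use L xL(2) in auto)
        then have "hat_dH K L \<le> 1 + norm xL" using K L by (simp add: hat_dH_def)
        then have "ennreal (Gf \<zeta> u v s) \<le> ennreal (1 + norm xL)" unfolding G by (rule ennreal_leI)
        also have "\<dots> = 1 + ennreal (norm xL)" by simp
        also have "\<dots> \<le> indicator {0..C} s + \<rho>v s" using r s unfolding C_def
          by (intro add_mono) (auto simp: indicator_def)
        also have "\<dots> \<le> indicator {0..C} s + \<rho>u s + \<rho>v s" by (simp add: add_mono)
        finally show ?thesis .
      qed
    next
      case K: False
      obtain xK where xK: "xK \<in> K" "\<And>y. y \<in> K \<Longrightarrow> norm y \<le> norm xK" using max_norm[OF cK K] by blast
      have rK: "ennreal (norm xK) \<le> \<rho>u s" "s \<le> Cu" using \<rho>u(3)[OF s, of xK] xK(1) unfolding K_def by auto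
      show ?thesis
      proof (cases "L = {}")
        case L: True
        have "hausdorff_dist K {0} \<le> norm xK + 0" by (rule hd_bound) (use K xK(2) in auto)
        then have "hat_dH K L \<le> 1 + norm xK" using K L by (simp add: hat_dH_def)
        then have "ennreal (Gf \<zeta> u v s) \<le> ennreal (1 + norm xK)" unfolding G by (rule ennreal_leI)
        also have "\<dots> = 1 + ennreal (norm xK)" by simp
        also have "\<dots> \<le> indicator {0..C} s + \<rho>u s" using rK s unfolding C_def
          by (intro add_mono) (auto simp: indicator_def)
        also have "\<dots> \<le> indicator {0..C} s + \<rho>u s + \<rho>v s" by simp
        finally show ?thesis .
      next
        case L: False
        obtain xL where xL: "xL \<in> L" "\<And>y. y \<in> L \<Longrightarrow> norm y \<le> norm xL" using max_norm[OF cL L] by blast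
        have rL: "ennreal (norm xL) \<le> \<rho>v s" using \<rho>v(3)[OF s, of xL] xL(1) unfolding L_def by auto
        have "hausdorff_dist K L \<le> norm xK + norm xL" by (rule hd_bound) (use K L xK(2) xL(2) in auto)
        then have "hat_dH K L \<le> norm xK + norm xL" using K L by (simp add: hat_dH_def)
        then have "ennreal (Gf \<zeta> u v s) \<le> ennreal (norm xK + norm xL)" unfolding G by (rule ennreal_leI)
        also have "\<dots> = ennreal (norm xK) + ennreal (norm xL)" by simp
        also have "\<dots> \<le> \<rho>u s + \<rho>v s" using rK(1) rL by (rule add_mono)
        also have "\<dots> \<le> indicator {0..C} s + \<rho>u s + \<rho>v s" by simp
        finally show ?thesis .
      qed
    qed
  qed
  have "(\<integral>\<^sup>+ s. ennreal (Gf \<zeta> u v s) \<partial>lborel) \<le> (\<integral>\<^sup>+ s. indicator {0..C} s + \<rho>u s + \<rho>v s \<partial>lborel)"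
    by (rule nn_integral_mono) (rule pw)
  also have "\<dots> = (\<integral>\<^sup>+ s. indicator {0..C} s + \<rho>u s \<partial>lborel) + (\<integral>\<^sup>+ s. \<rho>v s \<partial>lborel)"
    using \<rho>u(1) \<rho>v(1) by (intro nn_integral_add) auto
  also have "\<dots> = emeasure lborel {0..C} + (\<integral>\<^sup>+ s. \<rho>u s \<partial>lborel) + (\<integral>\<^sup>+ s. \<rho>v s \<partial>lborel)"
    using \<rho>u(1) by (subst nn_integral_add) auto
  also have "\<dots> < \<infinity>" using \<rho>u(2) \<rho>v(2) by (simp add: emeasure_lborel_Icc_eq)
  finally show ?thesis .
qed

lemma Gf_ae_contra:
  fixes u v :: "'a::euclidean_space \<Rightarrow> ereal"
  assumes z: "\<zeta> \<in> M0" and u: "u \<in> Conv_coe" and v: "v \<in> Conv_coe"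
    and ae: "AE s in lborel. Gf \<zeta> u v s = 0" and lt: "u x < v x"
  shows False
proof -
  have nm: "u x \<noteq> -\<infinity>" using u by (simp add: Conv_coe_def proper_fun_def)
  define a where "a = zeta_ext \<zeta> (v x)"
  define b where "b = zeta_ext \<zeta> (u x)"
  have a0: "0 \<le> a" unfolding a_def by (rule zeta_ext_nonneg[OF z])
  obtain r where r: "u x = ereal r" using lt nm by (cases "u x") auto
  have ab: "a < b"
  proof (cases "v x")
    case (real r')
    then have "r < r'" using lt r by simp
    then show ?thesis using M0D(2)[OF z] r real unfolding a_def b_def by (simp add: zeta_ext_def)
  next
    case PInf then show ?thesis using M0D(3)[OF z, of r] r unfolding a_def b_def by (simp add: zeta_ext_def)
  next
    case MInf then show ?thesis using lt by simp
  qed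
  have "AE s in lborel. s \<notin> {a<..<b}"
    using ae
  proof (rule AE_mp, intro AE_I2 impI)
    fix s assume G0: "Gf \<zeta> u v s = 0"
    show "s \<notin> {a<..<b}"
    proof
      assume s: "s \<in> {a<..<b}"
      then have sp: "0 < s" using a0 by simp
      have "x \<in> superlevel \<zeta> u s" using s unfolding superlevel_def b_def by simp
      moreover have "x \<notin> superlevel \<zeta> v s" using s unfolding superlevel_def a_def by simp
      ultimately show False using Gf_zero[OF z u v sp G0] by blast
    qed
  qed
  then have "emeasure lborel {a<..<b} = 0"
    by (subst (asm) AE_iff_measurable[where N="{a<..<b}"]) auto
  then show False using ab by simp
qed

theorem lemma5p7:
  fixes \<zeta> :: "real \<Rightarrow> real"
  assumes "\<zeta> \<in> M0"
  shows "\<forall>u \<in> (Conv_coe :: (real^'n \<Rightarrow> ereal) set). \<forall>v \<in> Conv_coe. \<forall>w \<in> Conv_coe.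
           delta_H \<zeta> u v < \<infinity>
         \<and> (delta_H \<zeta> u v = 0 \<longleftrightarrow> u = v)
         \<and> delta_H \<zeta> u v = delta_H \<zeta> v u
         \<and> delta_H \<zeta> u w \<le> delta_H \<zeta> u v + delta_H \<zeta> v w"
proof (intro ballI conjI)
  note z = assms
  fix u v w :: "real^'n \<Rightarrow> ereal"
  assume u: "u \<in> Conv_coe" and v: "v \<in> Conv_coe" and w: "w \<in> Conv_coe"
  show "delta_H \<zeta> u v < \<infinity>"
    unfolding delta_eq[OF z] by (rule Gf_finite[OF z u v])
  show "delta_H \<zeta> u v = delta_H \<zeta> v u"
    unfolding delta_eq[OF z] by (simp add: Gf_sym)
  show "delta_H \<zeta> u w \<le> delta_H \<zeta> u v + delta_H \<zeta> v w"
  proof -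
    have "(\<integral>\<^sup>+ s. ennreal (Gf \<zeta> u w s) \<partial>lborel) \<le> (\<integral>\<^sup>+ s. ennreal (Gf \<zeta> u v s) + ennreal (Gf \<zeta> v w s) \<partial>lborel)"
    proof (rule nn_integral_mono)
      fix s
      have "ennreal (Gf \<zeta> u w s) \<le> ennreal (Gf \<zeta> u v s + Gf \<zeta> v w s)"
        by (rule ennreal_leI) (rule Gf_tri[OF z u v w])
      also have "\<dots> = ennreal (Gf \<zeta> u v s) + ennreal (Gf \<zeta> v w s)"
        using Gf_nonneg[OF z u v, of s] Gf_nonneg[OF z v w, of s] by simp
      finally show "ennreal (Gf \<zeta> u w s) \<le> ennreal (Gf \<zeta> u v s) + ennreal (Gf \<zeta> v w s)" .
    qed
    also have "\<dots> = (\<integral>\<^sup>+ s. ennreal (Gf \<zeta> u v s) \<partial>lborel) + (\<integral>\<^sup>+ s. ennreal (Gf \<zeta> v w s) \<partial>lborel)"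
      by (rule nn_integral_add[OF Gf_meas[OF z u v] Gf_meas[OF z v w]])
    finally show ?thesis unfolding delta_eq[OF z] .
  qed
  show "delta_H \<zeta> u v = 0 \<longleftrightarrow> u = v"
  proof
    assume "u = v"
    then show "delta_H \<zeta> u v = 0" unfolding delta_eq[OF z] using Gf_self[OF z u] by simp
  next
    assume d0: "delta_H \<zeta> u v = 0"
    have "AE s in lborel. ennreal (Gf \<zeta> u v s) = 0"
      using d0 unfolding delta_eq[OF z] by (subst (asm) nn_integral_0_iff_AE[OF Gf_meas[OF z u v]])
    then have ae: "AE s in lborel. Gf \<zeta> u v s = 0"
      by eventually_elim (metis Gf_nonneg[OF z u v] antisym ennreal_eq_0_iff)
    have ae': "AE s in lborel. Gf \<zeta> v u s = 0" using ae by (simp add: Gf_sym)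
    show "u = v"
    proof
      fix x
      show "u x = v x"
      proof (rule ccontr)
        assume "u x \<noteq> v x"
        then consider "u x < v x" | "v x < u x" by (meson linorder_neqE)
        then show False
        proof cases
          case 1 then show False by (rule Gf_ae_contra[OF z u v ae])
        next
          case 2 then show False by (rule Gf_ae_contra[OF z v u ae'])
        qed
      qed
    qed
  qed
qed

end
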